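(* Let $d\ge1$ and let $\mathcal H\neq\{0\}$ be a Hilbert space which is continuously embedded in $\mathscr S'(\mathbb R^d)$, and such that for some constant $C_0\ge 1$, for every $f\in\mathcal H$ and $x,\xi\in\mathbb R^d$, $e^{i\langle\cdot,\xi\rangle}f(\cdot-x)\in\mathcal H$ and $\|e^{i\langle\cdot,\xi\rangle}f(\cdot-x)\|_{\mathcal H}\le C_0\|f\|_{\mathcal H}$. Let $\phi(x)=e^{-\frac12|x|^2}$. Then there is a constant $C>0$ such that $$|(f,\phi)|\le C\|f\|_{\mathcal H},\qquad f\in\mathcal H.$$
   Context: $\mathscr S'(\mathbb R^d)$ denotes the space of tempered distributions; $(f,\phi)$ denotes the (sesquilinear) extension of the $L^2(\mathbb R^d)$ scalar product to the pairing of $f\in\mathscr S'(\mathbb R^d)$ with $\phi\in\mathscr S(\mathbb R^d)$; $\langle\cdot,\cdot\rangle$ is the standard inner product on $\mathbb R^d$. *)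

theory Defs
  imports "HOL-Analysis.Analysis"
begin

definition partial_deriv :: "'n::finite \<Rightarrow> (real^'n \<Rightarrow> complex) \<Rightarrow> real^'n \<Rightarrow> complex" where
  "partial_deriv i f x = vector_derivative (\<lambda>t. f (x + t *\<^sub>R axis i 1)) (at 0)"

fun pderivs :: "'n::finite list \<Rightarrow> (real^'n \<Rightarrow> complex) \<Rightarrow> real^'n \<Rightarrow> complex" where
  "pderivs [] f = f"
| "pderivs (i # is) f = partial_deriv i (pderivs is f)"

definition monom :: "('n::finite \<Rightarrow> nat) \<Rightarrow> real^'n \<Rightarrow> real" where
  "monom \<alpha> x = (\<Prod>i\<in>UNIV. (x $ i) ^ \<alpha> i)"

definition schwartz :: "(real^'n::finite \<Rightarrow> complex) set" where
  "schwartz = {f. (\<forall>is x. (pderivs is f) differentiable (at x)) \<and>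
     (\<forall>is \<alpha>. bounded (range (\<lambda>x. complex_of_real (monom \<alpha> x) * pderivs is f x)))}"

definition schwartz_seminorm :: "nat \<Rightarrow> (real^'n::finite \<Rightarrow> complex) \<Rightarrow> real" where
  "schwartz_seminorm N f =
     (\<Sum>\<alpha>\<in>{\<alpha>::'n\<Rightarrow>nat. \<forall>i. \<alpha> i \<le> N}. \<Sum>is\<in>{is::'n list. length is \<le> N}.
        Sup (range (\<lambda>x. \<bar>monom \<alpha> x\<bar> * cmod (pderivs is f x))))"

text \<open>Tempered distributions, represented as complex-linear functionals on the
  Schwartz space (bilinear action, u g = "integral of u times g"), continuous w.r.t.
  the Schwartz seminorms, normalised to vanish outside the Schwartz space.\<close>
definition tempered :: "((real^'n::finite \<Rightarrow> complex) \<Rightarrow> complex) set" where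
  "tempered = {u.
     (\<forall>f\<in>schwartz. \<forall>g\<in>schwartz. u (\<lambda>x. f x + g x) = u f + u g) \<and>
     (\<forall>f\<in>schwartz. \<forall>c. u (\<lambda>x. c * f x) = c * u f) \<and>
     (\<exists>C N. \<forall>f\<in>schwartz. cmod (u f) \<le> C * schwartz_seminorm N f) \<and>
     (\<forall>g. g \<notin> schwartz \<longrightarrow> u g = 0)}"

text \<open>Sesquilinear pairing (u, phi) extending the L2 scalar product.\<close>
definition dpair :: "((real^'n::finite \<Rightarrow> complex) \<Rightarrow> complex) \<Rightarrow> (real^'n \<Rightarrow> complex) \<Rightarrow> complex" where
  "dpair u \<phi> = u (\<lambda>x. cnj (\<phi> x))"

text \<open>The distribution e^{i<.,xi>} u(. - x).\<close>
definition modtrans :: "real^'n::finite \<Rightarrow> real^'n \<Rightarrow> ((real^'n \<Rightarrow> complex) \<Rightarrow> complex)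
    \<Rightarrow> ((real^'n \<Rightarrow> complex) \<Rightarrow> complex)" where
  "modtrans \<xi> x u = (\<lambda>g. if g \<in> schwartz then u (\<lambda>z. cis ((z + x) \<bullet> \<xi>) * g (z + x)) else 0)"

definition ipnorm :: "('a \<Rightarrow> 'a \<Rightarrow> complex) \<Rightarrow> 'a \<Rightarrow> real" where
  "ipnorm ip u = sqrt (Re (ip u u))"

definition hilbert_subspace ::
  "((real^'n::finite \<Rightarrow> complex) \<Rightarrow> complex) set \<Rightarrow>
   (((real^'n \<Rightarrow> complex) \<Rightarrow> complex) \<Rightarrow> ((real^'n \<Rightarrow> complex) \<Rightarrow> complex) \<Rightarrow> complex) \<Rightarrow> bool" where
  "hilbert_subspace H ip \<longleftrightarrow>
     H \<subseteq> tempered \<and>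
     (\<lambda>g. 0) \<in> H \<and>
     (\<forall>u\<in>H. \<forall>v\<in>H. (\<lambda>g. u g + v g) \<in> H) \<and>
     (\<forall>u\<in>H. \<forall>c. (\<lambda>g. c * u g) \<in> H) \<and>
     (\<forall>u\<in>H. \<forall>v\<in>H. \<forall>w\<in>H. ip (\<lambda>g. u g + v g) w = ip u w + ip v w) \<and>
     (\<forall>u\<in>H. \<forall>w\<in>H. \<forall>c. ip (\<lambda>g. c * u g) w = c * ip u w) \<and>
     (\<forall>u\<in>H. \<forall>v\<in>H. ip u v = cnj (ip v u)) \<and>
     (\<forall>u\<in>H. 0 \<le> Re (ip u u)) \<and>
     (\<forall>u\<in>H. ip u u = 0 \<longrightarrow> u = (\<lambda>g. 0)) \<and>
     (\<forall>s. (\<forall>k. s k \<in> H) \<and>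
          (\<forall>e>0. \<exists>M. \<forall>m\<ge>M. \<forall>n\<ge>M. ipnorm ip (\<lambda>g. s m g - s n g) < e) \<longrightarrow>
          (\<exists>u\<in>H. (\<lambda>k. ipnorm ip (\<lambda>g. s k g - u g)) \<longlonglongrightarrow> 0))"

text \<open>Continuity of the inclusion H \<subseteq> S' (S' with its weak-* topology):
  each map u \<mapsto> (u, phi), phi Schwartz, is continuous on H.\<close>
definition cont_embedded ::
  "((real^'n::finite \<Rightarrow> complex) \<Rightarrow> complex) set \<Rightarrow>
   (((real^'n \<Rightarrow> complex) \<Rightarrow> complex) \<Rightarrow> ((real^'n \<Rightarrow> complex) \<Rightarrow> complex) \<Rightarrow> complex) \<Rightarrow> bool" where
  "cont_embedded H ip \<longleftrightarrow>
     (\<forall>\<phi>\<in>schwartz. \<forall>u\<in>H. \<forall>e>0. \<exists>\<delta>>0. \<forall>v\<in>H.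
        ipnorm ip (\<lambda>g. v g - u g) < \<delta> \<longrightarrow> cmod (dpair v \<phi> - dpair u \<phi>) < e)"

definition gaussian :: "real^'n::finite \<Rightarrow> complex" where
  "gaussian x = complex_of_real (exp (- (1/2) * (norm x)^2))"

end

theory Submission
  imports Defs
begin

theorem lemma2p1:
  fixes H :: "((real^'n::finite \<Rightarrow> complex) \<Rightarrow> complex) set"
    and ip :: "((real^'n \<Rightarrow> complex) \<Rightarrow> complex) \<Rightarrow> ((real^'n \<Rightarrow> complex) \<Rightarrow> complex) \<Rightarrow> complex"
    and C0 :: real
  assumes "hilbert_subspace H ip"
    and "cont_embedded H ip"
    and "\<exists>u\<in>H. u \<noteq> (\<lambda>g. 0)"
    and "C0 \<ge> 1"
    and "\<forall>u\<in>H. \<forall>x \<xi>. modtrans \<xi> x u \<in> H \<and> ipnorm ip (modtrans \<xi> x u) \<le> C0 * ipnorm ip u"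
  shows "\<exists>C>0. \<forall>u\<in>H. cmod (dpair u gaussian) \<le> C * ipnorm ip u"
proof (cases "gaussian \<in> (schwartz :: (real^'n \<Rightarrow> complex) set)")
  case False
  have cg: "(\<lambda>x. cnj (gaussian x)) = (gaussian :: real^'n \<Rightarrow> complex)"
    by (auto simp: gaussian_def)
  have "\<forall>u\<in>H. dpair u gaussian = 0"
  proof
    fix u assume "u \<in> H"
    then have "u \<in> tempered" using assms(1) unfolding hilbert_subspace_def by blast
    then show "dpair u gaussian = 0" using False cg unfolding tempered_def dpair_def by auto
  qed
  moreover have "\<forall>u\<in>H. 0 \<le> Re (ip u u)" using assms(1) unfolding hilbert_subspace_def by blast
  then have "\<forall>u\<in>H. 0 \<le> ipnorm ip u" unfolding ipnorm_def by simp
  ultimately show ?thesis by (intro exI[of _ 1]) auto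
next
  case True
  have H: "(\<lambda>g. 0) \<in> H" "\<forall>u\<in>H. \<forall>c. (\<lambda>g. c * u g) \<in> H"
    "\<forall>u\<in>H. \<forall>w\<in>H. \<forall>c. ip (\<lambda>g. c * u g) w = c * ip u w"
    "\<forall>u\<in>H. \<forall>v\<in>H. ip u v = cnj (ip v u)"
    "\<forall>u\<in>H. ip u u = 0 \<longrightarrow> u = (\<lambda>g. 0)"
    using assms(1) unfolding hilbert_subspace_def by blast+
  obtain \<delta> where d: "\<delta> > 0" and dd: "\<And>v. v \<in> H \<Longrightarrow> ipnorm ip (\<lambda>g. v g - 0) < \<delta> \<Longrightarrow>
      cmod (dpair v gaussian - dpair (\<lambda>g. 0) (gaussian :: real^'n \<Rightarrow> complex)) < 1"
  proof -
    have ce: "\<forall>\<phi>\<in>schwartz. \<forall>u\<in>H. \<forall>e>0. \<exists>\<delta>>0. \<forall>v\<in>H.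
        ipnorm ip (\<lambda>g. v g - u g) < \<delta> \<longrightarrow> cmod (dpair v \<phi> - dpair u \<phi>) < e"
      using assms(2) unfolding cont_embedded_def by blast
    have "\<exists>\<delta>>0. \<forall>v\<in>H.
        ipnorm ip (\<lambda>g. v g - 0) < \<delta> \<longrightarrow> cmod (dpair v gaussian - dpair (\<lambda>g. 0) (gaussian :: real^'n \<Rightarrow> complex)) < 1"
      using ce[rule_format, OF True H(1) zero_less_one] by (simp add: diff_zero)
    then show ?thesis using that by blast
  qed
  have dz: "dpair (\<lambda>g. 0) \<phi> = 0" for \<phi> :: "real^'n \<Rightarrow> complex" by (simp add: dpair_def)
  have key: "cmod (dpair u gaussian) \<le> (2/\<delta>) * ipnorm ip u" if u: "u \<in> H" for u
  proof -
    have real: "ip u u = complex_of_real (Re (ip u u))"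
    proof -
      have "ip u u = cnj (ip u u)" using H(4) u by blast
      then have "Im (ip u u) = - Im (ip u u)" by (metis cnj.sel(2))
      then have "Im (ip u u) = 0" by simp
      then show ?thesis by (simp add: complex_eq_iff)
    qed
    show ?thesis
    proof (cases "ipnorm ip u = 0")
      case True
      moreover have "0 \<le> Re (ip u u)" using assms(1) u unfolding hilbert_subspace_def by blast
      ultimately have "Re (ip u u) = 0" unfolding ipnorm_def by simp
      then have "ip u u = 0" using real by simp
      then have "u = (\<lambda>g. 0)" using H(5) u by blast
      then show ?thesis using dz True by simp
    next
      case False
      define r where "r = ipnorm ip u"
      have nn: "0 \<le> Re (ip u u)" using assms(1) u unfolding hilbert_subspace_def by blast
      have r0: "r > 0" using False nn unfolding r_def ipnorm_def by simp
      define c where "c = \<delta> / (2 * r)"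
      have c0: "c > 0" using r0 d by (simp add: c_def)
      define v where "v = (\<lambda>g. complex_of_real c * u g)"
      have vH: "v \<in> H" using H(2) u v_def by blast
      have "ip v v = complex_of_real c * ip u v" using H(3) u vH v_def by blast
      also have "ip u v = cnj (ip v u)" using H(4) u vH by blast
      also have "ip v u = complex_of_real c * ip u u" using H(3) u v_def by blast
      finally have "ip v v = complex_of_real (c^2 * Re (ip u u))"
        by (subst (asm) real) (simp add: power2_eq_square)
      then have "ipnorm ip v = c * r" using c0
        by (simp add: ipnorm_def r_def real_sqrt_mult)
      also have "\<dots> = \<delta>/2" using r0 by (simp add: c_def)
      finally have "ipnorm ip (\<lambda>g. v g - 0) < \<delta>" using d by simp
      then have "cmod (dpair v gaussian) < 1" using dd[OF vH] dz by simp
      moreover have "dpair v gaussian = complex_of_real c * dpair u gaussian"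
        by (simp add: dpair_def v_def)
      ultimately have "c * cmod (dpair u gaussian) < 1" using c0 by (simp add: norm_mult)
      then have "cmod (dpair u gaussian) < 1 / c" using c0 by (simp add: field_simps)
      also have "1 / c = (2/\<delta>) * r" using r0 d by (simp add: c_def)
      finally show ?thesis unfolding r_def by simp
    qed
  qed
  show ?thesis using key d by (intro exI[of _ "2/\<delta>"]) auto
qed

end
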